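(* Let $n,m,k$ be positive integers with $n\le m$ and $k<m\le kn$. Then $$\sup_I \frac{\text{OPT-ESW}(I)}{\max_{\mathcal{A}\in \mathcal{C}_k(I)}\text{ESW}(\mathcal{A})}=\max\left\{\frac{m-n+1}{k},1\right\},$$ where the supremum ranges over all single-category instances $I$ with $n$ agents, $m$ goods and cardinality constraint $k$.
   Context: A single-category instance has $n$ agents and a set $M$ of $m$ indivisible goods; each agent $i$ has an additive utility function $u_i:2^M\to\mathbb{R}_{\ge 0}$ with $u_i(\emptyset)=0$ and $u_i(M)=1$. An allocation is a partition $(A_1,\dots,A_n)$ of $M$; it is cardinal if $|A_i|\le k$ for all $i$, and $\mathcal{C}_k(I)$ denotes the set of cardinal allocations. $\text{ESW}(\mathcal{A})=\min_i u_i(A_i)$ and $\text{OPT-ESW}(I)$ is its maximum over all allocations. If $\text{OPT-ESW}(I)=0$ the ratio is defined to be $1$. *)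

theory Defs
  imports Complex_Main "HOL-Library.FuncSet" "HOL-Library.Extended_Real"
begin

(* An instance is given by the additive
   valuations v i g (value of good g for agent i). *)

definition valid_instance :: "nat \<Rightarrow> nat \<Rightarrow> (nat \<Rightarrow> nat \<Rightarrow> real) \<Rightarrow> bool" where
  "valid_instance n m v \<longleftrightarrow>
     (\<forall>i<n. \<forall>g<m. 0 \<le> v i g) \<and> (\<forall>i<n. (\<Sum>g<m. v i g) = 1)"

definition allocations :: "nat \<Rightarrow> nat \<Rightarrow> (nat \<Rightarrow> nat) set" where
  "allocations n m = PiE {..<m} (\<lambda>_. {..<n})"

definition good_bundle :: "nat \<Rightarrow> (nat \<Rightarrow> nat) \<Rightarrow> nat \<Rightarrow> nat set" where
  "good_bundle m f i = {g \<in> {..<m}. f g = i}"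

definition cardinal_allocations :: "nat \<Rightarrow> nat \<Rightarrow> nat \<Rightarrow> (nat \<Rightarrow> nat) set" where
  "cardinal_allocations n m k = {f \<in> allocations n m. \<forall>i<n. card (good_bundle m f i) \<le> k}"

definition ESW :: "nat \<Rightarrow> nat \<Rightarrow> (nat \<Rightarrow> nat \<Rightarrow> real) \<Rightarrow> (nat \<Rightarrow> nat) \<Rightarrow> real" where
  "ESW n m v f = Min ((\<lambda>i. \<Sum>g\<in>good_bundle m f i. v i g) ` {..<n})"

definition OPT_ESW :: "nat \<Rightarrow> nat \<Rightarrow> (nat \<Rightarrow> nat \<Rightarrow> real) \<Rightarrow> real" where
  "OPT_ESW n m v = Max (ESW n m v ` allocations n m)"

definition card_ESW :: "nat \<Rightarrow> nat \<Rightarrow> nat \<Rightarrow> (nat \<Rightarrow> nat \<Rightarrow> real) \<Rightarrow> real" where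
  "card_ESW n m k v = Max (ESW n m v ` cardinal_allocations n m k)"

(* ratio in the extended reals: OPT/0 with OPT > 0 is +infinity; ratio 1 if OPT = 0 *)
definition esw_ratio :: "nat \<Rightarrow> nat \<Rightarrow> nat \<Rightarrow> (nat \<Rightarrow> nat \<Rightarrow> real) \<Rightarrow> ereal" where
  "esw_ratio n m k v =
     (if OPT_ESW n m v = 0 then 1 else ereal (OPT_ESW n m v) / ereal (card_ESW n m k v))"

end

theory Submission
  imports Defs
begin


lemma top_subset:
  fixes w :: "'a \<Rightarrow> real"
  shows "finite B \<Longrightarrow> s \<le> card B \<Longrightarrow>
     \<exists>S\<subseteq>B. card S = s \<and> real s * sum w B \<le> real (card B) * sum w S"
proof (induction "card B - s" arbitrary: B)
  case 0
  then have "card B = s" by simp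
  then show ?case by (intro exI[of _ B]) (simp add: mult.commute)
next
  case (Suc d)
  let ?b = "card B"
  have bs: "s < ?b" using Suc.hyps(2) by simp
  show ?case
  proof (cases "s = 0")
    case True
    then show ?thesis by (intro exI[of _ "{}"]) simp
  next
    case False
    have ne: "B \<noteq> {}" using bs by auto
    obtain x where xB: "x \<in> B" and xmin: "\<forall>y\<in>B. w x \<le> w y"
    proof -
      have "Min (w ` B) \<in> w ` B" using Suc.prems(1) ne by simp
      then obtain x where "x \<in> B" "w x = Min (w ` B)" by auto
      moreover have "\<forall>y\<in>B. Min (w ` B) \<le> w y" using Suc.prems(1) by simp
      ultimately show ?thesis using that by auto
    qed
    let ?B = "B - {x}"
    have cB: "card ?B = ?b - 1" using xB Suc.prems(1) by simp
    have fB: "finite ?B" using Suc.prems(1) by simp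
    have "d = card ?B - s" using cB Suc.hyps(2) by simp
    moreover have "s \<le> card ?B" using cB bs by simp
    ultimately obtain S where S: "S \<subseteq> ?B" "card S = s"
      "real s * sum w ?B \<le> real (card ?B) * sum w S"
      using Suc.hyps(1) fB by blast
    have sumB: "sum w B = w x + sum w ?B" using xB Suc.prems(1) by (simp add: sum.remove)
    have lb: "real ?b * w x \<le> sum w B"
      using sum_bounded_below[of B "w x" w] xmin by simp
    have b2: "?b \<ge> 2" using bs False by simp
    have cBr: "real (card ?B) = real ?b - 1" using cB b2 by simp
    let ?T = "sum w S"
    have i1: "(real ?b - 1) * ?T \<ge> real s * (sum w B - w x)"
      using S(3) cBr sumB by simp
    have "(real ?b - 1) * (real ?b * ?T) = real ?b * ((real ?b - 1) * ?T)" by simp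
    also have "\<dots> \<ge> real ?b * (real s * (sum w B - w x))"
      using i1 by (intro mult_left_mono) auto
    finally have i2: "(real ?b - 1) * (real ?b * ?T) \<ge> real s * (real ?b * sum w B - real ?b * w x)"
      by (simp add: algebra_simps)
    have "real s * (real ?b * sum w B - real ?b * w x) \<ge> real s * (real ?b * sum w B - sum w B)"
      using lb by (intro mult_left_mono) auto
    with i2 have "(real ?b - 1) * (real ?b * ?T) \<ge> (real ?b - 1) * (real s * sum w B)"
      by (simp add: algebra_simps)
    then have "real ?b * ?T \<ge> real s * sum w B"
      using b2 by (subst (asm) mult_le_cancel_left_pos) auto
    then show ?thesis using S(1,2) by (intro exI[of _ S]) auto
  qed
qed



lemma bundle_full:
  assumes "\<forall>i<n. T i \<subseteq> {..<m}"
    and "\<forall>i<n. \<forall>j<n. i \<noteq> j \<longrightarrow> T i \<inter> T j = {}"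
    and "(\<Union>i<n. T i) = {..<m}"
  defines "g \<equiv> (\<lambda>x\<in>{..<m}. SOME i. i < n \<and> x \<in> T i)"
  shows "g \<in> allocations n m" and "\<And>i. i < n \<Longrightarrow> good_bundle m g i = T i"
proof -
  have ex: "\<exists>i. i < n \<and> x \<in> T i" if "x < m" for x using assms(3) that by auto
  have gx: "g x < n \<and> x \<in> T (g x)" if "x < m" for x
    using someI_ex[OF ex[OF that]] that unfolding g_def by simp
  show "g \<in> allocations n m" unfolding allocations_def g_def
    using gx unfolding g_def by auto
  fix i assume i: "i < n"
  show "good_bundle m g i = T i"
  proof
    show "good_bundle m g i \<subseteq> T i" unfolding good_bundle_def using gx by auto
    show "T i \<subseteq> good_bundle m g i"
    proof
      fix x assume x: "x \<in> T i"
      then have xm: "x < m" using assms(1) i by auto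
      have "g x = i" using gx[OF xm] assms(2) i x by blast
      then show "x \<in> good_bundle m g i" unfolding good_bundle_def using xm by auto
    qed
  qed
qed

lemma extend_alloc:
  fixes T :: "nat \<Rightarrow> nat set"
  shows "card (\<Union>i<n. T i) + r = m \<Longrightarrow> m \<le> k * n \<Longrightarrow> \<forall>i<n. T i \<subseteq> {..<m} \<Longrightarrow>
     \<forall>i<n. card (T i) \<le> k \<Longrightarrow> \<forall>i<n. \<forall>j<n. i \<noteq> j \<longrightarrow> T i \<inter> T j = {} \<Longrightarrow>
     \<exists>g\<in>cardinal_allocations n m k. \<forall>i<n. T i \<subseteq> good_bundle m g i"
proof (induction r arbitrary: T)
  case 0
  have sub: "(\<Union>i<n. T i) \<subseteq> {..<m}" using 0 by auto
  then have eq: "(\<Union>i<n. T i) = {..<m}" using 0(1)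
    by (intro card_subset_eq) auto
  define g where "g = (\<lambda>x\<in>{..<m}. SOME i. i < n \<and> x \<in> T i)"
  have g1: "g \<in> allocations n m" and g2: "\<And>i. i < n \<Longrightarrow> good_bundle m g i = T i"
    using bundle_full[OF 0(3) 0(5) eq] unfolding g_def by auto
  show ?case
    by (rule bexI[of _ g]) (use g1 g2 0(4) in \<open>auto simp: cardinal_allocations_def\<close>)
next
  case (Suc r)
  have fin: "\<forall>i<n. finite (T i)" using Suc.prems(3) finite_subset by blast
  have sub: "(\<Union>i<n. T i) \<subseteq> {..<m}" using Suc.prems by auto
  obtain x where x: "x < m" "x \<notin> (\<Union>i<n. T i)"
  proof -
    have "(\<Union>i<n. T i) \<noteq> {..<m}"
    proof
      assume "(\<Union>i<n. T i) = {..<m}"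
      then have "card (\<Union>i<n. T i) = m" by simp
      then show False using Suc.prems(1) by simp
    qed
    then have "\<exists>x. x < m \<and> x \<notin> (\<Union>i<n. T i)" using sub by blast
    then show ?thesis using that by blast
  qed
  have cu: "card (\<Union>i<n. T i) = (\<Sum>i<n. card (T i))"
    using fin Suc.prems(5) by (intro card_UN_disjoint) auto
  obtain i where i: "i < n" "card (T i) < k"
  proof (rule ccontr)
    assume "\<not> thesis"
    then have "\<forall>i<n. k \<le> card (T i)" using that by force
    then have "(\<Sum>i<n. k) \<le> (\<Sum>i<n. card (T i))" by (intro sum_mono) auto
    then show False using cu Suc.prems(1,2) by (simp add: mult.commute)
  qed
  define T' where "T' = T(i := insert x (T i))"
  have un: "(\<Union>j<n. T' j) = insert x (\<Union>j<n. T j)"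
    unfolding T'_def using i(1) by (auto split: if_splits)
  have fu: "finite (\<Union>j<n. T j)" using fin by auto
  have "card (\<Union>j<n. T' j) + r = m" using un x(2) fu Suc.prems(1) by simp
  moreover have "\<forall>j<n. T' j \<subseteq> {..<m}" using Suc.prems(3) x(1) unfolding T'_def by auto
  moreover have "\<forall>j<n. card (T' j) \<le> k" using Suc.prems(4) i fin x(2) unfolding T'_def
    by (auto simp: card_insert_if)
  moreover have "\<forall>j<n. \<forall>l<n. j \<noteq> l \<longrightarrow> T' j \<inter> T' l = {}"
    using Suc.prems(5) x(2) i(1) unfolding T'_def by auto
  ultimately obtain g where g: "g \<in> cardinal_allocations n m k" "\<forall>j<n. T' j \<subseteq> good_bundle m g j"
    using Suc.IH Suc.prems(2) by blast
  have "\<forall>j<n. T j \<subseteq> T' j" unfolding T'_def by auto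
  then show ?case using g by blast
qed



lemma alloc_finite: "finite (allocations n m)"
  unfolding allocations_def by (intro finite_PiE) auto

lemma alloc_ne: "0 < n \<Longrightarrow> allocations n m \<noteq> {}"
proof -
  assume "0 < n"
  then have "(\<lambda>x\<in>{..<m}. 0::nat) \<in> allocations n m" unfolding allocations_def by auto
  then show ?thesis by auto
qed

lemma bundle_finite: "finite (good_bundle m f i)"
  unfolding good_bundle_def by auto

lemma bundle_sub: "good_bundle m f i \<subseteq> {..<m}"
  unfolding good_bundle_def by auto

lemma upper:
  assumes n0: "0 < n" and k0: "0 < k" and nm: "n \<le> m" and mk: "m \<le> k * n"
    and val: "valid_instance n m v" and pos: "0 < OPT_ESW n m v"
  shows "OPT_ESW n m v \<le> card_ESW n m k v * max (real (m - n + 1) / real k) 1"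
    and "card_ESW n m k v \<le> OPT_ESW n m v"
proof -
  define R where "R = max (real (m - n + 1) / real k) 1"
  define OPT where "OPT = OPT_ESW n m v"
  have vnn: "\<And>i g. i < n \<Longrightarrow> g < m \<Longrightarrow> 0 \<le> v i g" using val unfolding valid_instance_def by auto
  have "OPT \<in> ESW n m v ` allocations n m"
    unfolding OPT_def OPT_ESW_def using alloc_finite alloc_ne[OF n0] by (intro Max_in) auto
  then obtain f where f: "f \<in> allocations n m" "ESW n m v f = OPT" by auto
  define B where "B i = good_bundle m f i" for i
  have fB: "finite (B i)" for i unfolding B_def by (rule bundle_finite)
  have optle: "OPT \<le> sum (v i) (B i)" if "i < n" for i
  proof -
    have "ESW n m v f \<le> sum (v i) (B i)" unfolding ESW_def B_def
      using that by (intro Min_le) auto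
    then show ?thesis using f by simp
  qed
  have Bne: "B i \<noteq> {}" if "i < n" for i using optle[OF that] pos OPT_def by auto
  have Bdisj: "\<forall>i<n. \<forall>j<n. i \<noteq> j \<longrightarrow> B i \<inter> B j = {}" unfolding B_def good_bundle_def by auto
  have Bun: "(\<Union>i<n. B i) = {..<m}"
    using f(1) unfolding B_def good_bundle_def allocations_def by (auto simp: PiE_iff)
  have sumc: "(\<Sum>i<n. card (B i)) = m"
  proof -
    have "card (\<Union>i<n. B i) = (\<Sum>i<n. card (B i))"
      using fB Bdisj by (intro card_UN_disjoint) auto
    then show ?thesis using Bun by simp
  qed
  have Bcard: "card (B i) \<le> m - n + 1" if i: "i < n" for i
  proof -
    have "(\<Sum>i<n. card (B i)) = card (B i) + (\<Sum>j\<in>{..<n}-{i}. card (B j))"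
      using i by (simp add: sum.remove)
    moreover have "(\<Sum>j\<in>{..<n}-{i}. 1) \<le> (\<Sum>j\<in>{..<n}-{i}. card (B j))"
      using Bne fB by (intro sum_mono) (auto simp: card_gt_0_iff Suc_le_eq)
    moreover have "(\<Sum>j\<in>{..<n}-{i}. (1::nat)) = n - 1" using i by simp
    ultimately show ?thesis using sumc nm n0 by linarith
  qed
  have "\<forall>i<n. \<exists>S. S \<subseteq> B i \<and> card S = min k (card (B i)) \<and>
      real (min k (card (B i))) * sum (v i) (B i) \<le> real (card (B i)) * sum (v i) S"
  proof (intro allI impI)
    fix i assume "i < n"
    show "\<exists>S. S \<subseteq> B i \<and> card S = min k (card (B i)) \<and>
      real (min k (card (B i))) * sum (v i) (B i) \<le> real (card (B i)) * sum (v i) S"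
      using top_subset[OF fB[of i], of "min k (card (B i))" "v i"] by auto
  qed
  then obtain S where S: "\<And>i. i < n \<Longrightarrow> S i \<subseteq> B i \<and> card (S i) = min k (card (B i)) \<and>
      real (min k (card (B i))) * sum (v i) (B i) \<le> real (card (B i)) * sum (v i) (S i)"
    by metis
  have Ssub: "\<forall>i<n. S i \<subseteq> {..<m}" using S Bun by blast
  have Scard: "\<forall>i<n. card (S i) \<le> k" using S by auto
  have Sdisj: "\<forall>i<n. \<forall>j<n. i \<noteq> j \<longrightarrow> S i \<inter> S j = {}" using S Bdisj by blast
  have fS: "finite (\<Union>i<n. S i)" using Ssub finite_subset by blast
  have "card (\<Union>i<n. S i) \<le> m" using Ssub card_mono[of "{..<m}" "\<Union>i<n. S i"] by auto
  then obtain r where "card (\<Union>i<n. S i) + r = m" using le_Suc_ex by blast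
  then obtain g where g: "g \<in> cardinal_allocations n m k" "\<forall>i<n. S i \<subseteq> good_bundle m g i"
    using extend_alloc[OF _ mk Ssub Scard Sdisj] by blast
  have R1: "R \<ge> 1" unfolding R_def by simp
  have Rp: "R \<ge> real (m - n + 1) / real k" unfolding R_def by simp
  have each: "OPT \<le> sum (v i) (good_bundle m g i) * R" if i: "i < n" for i
  proof -
    have vS: "sum (v i) (S i) \<le> sum (v i) (good_bundle m g i)"
      using g(2) i bundle_finite vnn by (intro sum_mono2) (auto simp: good_bundle_def)
    have S0: "0 \<le> sum (v i) (S i)" using Ssub vnn i by (intro sum_nonneg) auto
    have key: "OPT \<le> sum (v i) (S i) * R"
    proof (cases "card (B i) \<le> k")
      case True
      then have "real (card (B i)) * sum (v i) (B i) \<le> real (card (B i)) * sum (v i) (S i)"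
        using S[OF i] by simp
      then have "sum (v i) (B i) \<le> sum (v i) (S i)" using Bne[OF i] fB
        by (simp add: card_gt_0_iff)
      moreover have "sum (v i) (S i) \<le> sum (v i) (S i) * R" using S0 R1
        by (metis mult_left_mono mult.right_neutral)
      ultimately show ?thesis using optle[OF i] by linarith
    next
      case False
      then have "real k * sum (v i) (B i) \<le> real (card (B i)) * sum (v i) (S i)"
        using S[OF i] by simp
      moreover have "real k * OPT \<le> real k * sum (v i) (B i)" using optle[OF i] by (intro mult_left_mono) auto
      moreover have "real (card (B i)) * sum (v i) (S i) \<le> real (m - n + 1) * sum (v i) (S i)"
        using Bcard[OF i] S0 by (intro mult_right_mono) auto
      ultimately have "real k * OPT \<le> real (m - n + 1) * sum (v i) (S i)" by linarith
      then have "OPT \<le> real (m - n + 1) / real k * sum (v i) (S i)"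
        using k0 by (simp add: field_simps)
      also have "\<dots> \<le> R * sum (v i) (S i)" using Rp S0 by (intro mult_right_mono) auto
      finally show ?thesis by (simp add: mult.commute)
    qed
    also have "\<dots> \<le> sum (v i) (good_bundle m g i) * R" using vS R1 by (intro mult_right_mono) auto
    finally show ?thesis .
  qed
  have "ESW n m v g \<in> (\<lambda>i. \<Sum>x\<in>good_bundle m g i. v i x) ` {..<n}"
    unfolding ESW_def using n0 by (intro Min_in) auto
  then obtain i where i: "i < n" "ESW n m v g = sum (v i) (good_bundle m g i)" by auto
  have fC: "finite (cardinal_allocations n m k)"
    using alloc_finite unfolding cardinal_allocations_def by auto
  have gC: "ESW n m v g \<le> card_ESW n m k v" unfolding card_ESW_def
    using fC g(1) by (intro Max_ge) auto
  have "OPT \<le> ESW n m v g * R" using each[OF i(1)] i(2) by simp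
  also have "\<dots> \<le> card_ESW n m k v * R" using gC R1 by (intro mult_right_mono) auto
  finally show "OPT_ESW n m v \<le> card_ESW n m k v * max (real (m - n + 1) / real k) 1"
    unfolding OPT_def R_def .
  show "card_ESW n m k v \<le> OPT_ESW n m v" unfolding card_ESW_def OPT_ESW_def
    using g(1) alloc_finite by (intro Max_mono) (auto simp: cardinal_allocations_def)
qed



lemma card_alloc_ne: "m \<le> k * n \<Longrightarrow> cardinal_allocations n m k \<noteq> {}"
  using extend_alloc[where T="\<lambda>_. {}" and r=m and m=m and k=k and n=n] by auto

lemma ESW_nonneg:
  assumes "0 < n" "valid_instance n m v" shows "0 \<le> ESW n m v f"
proof -
  have "ESW n m v f \<in> (\<lambda>i. \<Sum>x\<in>good_bundle m f i. v i x) ` {..<n}"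
    unfolding ESW_def using assms by (intro Min_in) auto
  then obtain i where i: "i < n" "ESW n m v f = sum (v i) (good_bundle m f i)" by auto
  show ?thesis unfolding i(2) using assms(2) i(1)
    by (intro sum_nonneg) (auto simp: valid_instance_def good_bundle_def)
qed

lemma ratio_upper:
  assumes n0: "0 < n" and k0: "0 < k" and nm: "n \<le> m" and mk: "m \<le> k * n"
    and val: "valid_instance n m v"
  shows "esw_ratio n m k v \<le> ereal (max (real (m - n + 1) / real k) 1)"
proof (cases "OPT_ESW n m v = 0")
  case True
  then show ?thesis unfolding esw_ratio_def by (simp add: le_max_iff_disj)
next
  case False
  define R where "R = max (real (m - n + 1) / real k) 1"
  have "OPT_ESW n m v \<in> ESW n m v ` allocations n m"
    unfolding OPT_ESW_def using alloc_finite alloc_ne[OF n0] by (intro Max_in) auto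
  then have "0 \<le> OPT_ESW n m v" using ESW_nonneg[OF n0 val] by auto
  then have pos: "0 < OPT_ESW n m v" using False by simp
  have u: "OPT_ESW n m v \<le> card_ESW n m k v * R"
    using upper(1)[OF n0 k0 nm mk val pos] unfolding R_def .
  have R1: "R \<ge> 1" unfolding R_def by simp
  have cpos: "0 < card_ESW n m k v"
  proof (rule ccontr)
    assume "\<not> 0 < card_ESW n m k v"
    then have "card_ESW n m k v * R \<le> 0" using R1 by (simp add: mult_nonpos_nonneg)
    then show False using u pos by simp
  qed
  have "OPT_ESW n m v / card_ESW n m k v \<le> R" using u cpos by (simp add: field_simps)
  moreover have "esw_ratio n m k v = ereal (OPT_ESW n m v / card_ESW n m k v)"
    unfolding esw_ratio_def using False cpos by simp
  ultimately show ?thesis unfolding R_def by (simp only: ereal_less_eq(3))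
qed

definition inst :: "nat \<Rightarrow> nat \<Rightarrow> nat \<Rightarrow> nat \<Rightarrow> real" where
  "inst n m i g = (if i = 0 then (if g < m - n + 1 then 1 / real (m - n + 1) else 0)
                   else (if g = m - n + i then 1 else 0))"

lemma inst_valid: assumes "0 < n" "n \<le> m" shows "valid_instance n m (inst n m)"
proof -
  let ?p = "m - n + 1"
  have s0: "(\<Sum>g<m. inst n m 0 g) = 1"
  proof -
    have "(\<Sum>g<m. inst n m 0 g) = (\<Sum>g\<in>{..<m} \<inter> {g. g < ?p}. 1 / real ?p)"
      unfolding inst_def by (simp add: sum.If_cases)
    also have "{..<m} \<inter> {g. g < ?p} = {..<?p}" using assms by auto
    finally show ?thesis by simp
  qed
  have si: "(\<Sum>g<m. inst n m i g) = 1" if "0 < i" "i < n" for i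
  proof -
    have "(\<Sum>g<m. inst n m i g) = (\<Sum>g<m. if g = m - n + i then 1 else 0)"
      unfolding inst_def using that by simp
    also have "\<dots> = 1" using that assms by (subst sum.delta) auto
    finally show ?thesis .
  qed
  have nn: "\<forall>i<n. \<forall>g<m. 0 \<le> inst n m i g" by (simp add: inst_def)
  have "\<forall>i<n. (\<Sum>g<m. inst n m i g) = 1"
  proof (intro allI impI)
    fix i assume i: "i < n"
    show "(\<Sum>g<m. inst n m i g) = 1"
    proof (cases "i = 0")
      case True
      then show ?thesis using s0 by simp
    next
      case False
      then show ?thesis using si[of i] i by simp
    qed
  qed
  then show ?thesis unfolding valid_instance_def using nn by blast
qed

lemma inst_opt: assumes "0 < n" "n \<le> m" shows "1 \<le> OPT_ESW n m (inst n m)"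
proof -
  let ?p = "m - n + 1"
  define f where "f = (\<lambda>x\<in>{..<m}. if x < ?p then 0 else x - (m - n))"
  have fa: "f \<in> allocations n m" unfolding allocations_def f_def using assms by auto
  have "ESW n m (inst n m) f \<in> (\<lambda>i. \<Sum>x\<in>good_bundle m f i. inst n m i x) ` {..<n}"
    unfolding ESW_def using assms by (intro Min_in) auto
  then obtain i where i: "i < n" "ESW n m (inst n m) f = sum (inst n m i) (good_bundle m f i)" by auto
  have nn: "0 \<le> inst n m i x" for x unfolding inst_def by auto
  have "1 \<le> sum (inst n m i) (good_bundle m f i)"
  proof (cases "i = 0")
    case True
    have sub: "{..<?p} \<subseteq> good_bundle m f i"
      unfolding good_bundle_def f_def True using assms by auto
    have "(\<Sum>g<?p. inst n m 0 g) = 1" unfolding inst_def by simp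
    moreover have "(\<Sum>g<?p. inst n m 0 g) \<le> sum (inst n m i) (good_bundle m f i)"
      using sub nn unfolding True by (intro sum_mono2 bundle_finite) auto
    ultimately show ?thesis by simp
  next
    case False
    have mem: "m - n + i \<in> good_bundle m f i"
      unfolding good_bundle_def f_def using False i assms by auto
    have "1 = inst n m i (m - n + i)" unfolding inst_def using False by simp
    also have "\<dots> \<le> sum (inst n m i) (good_bundle m f i)"
      using mem nn bundle_finite by (intro member_le_sum) auto
    finally show ?thesis .
  qed
  also have "\<dots> = ESW n m (inst n m) f" using i by simp
  also have "\<dots> \<le> OPT_ESW n m (inst n m)" unfolding OPT_ESW_def
    using fa alloc_finite by (intro Max_ge) auto
  finally show ?thesis .
qed

lemma inst_card: assumes "0 < n" "n \<le> m" "m \<le> k * n"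
  shows "card_ESW n m k (inst n m) * real (m - n + 1) \<le> real k"
proof -
  let ?p = "m - n + 1"
  have fC: "finite (cardinal_allocations n m k)"
    using alloc_finite unfolding cardinal_allocations_def by auto
  have "card_ESW n m k (inst n m) \<in> ESW n m (inst n m) ` cardinal_allocations n m k"
    unfolding card_ESW_def using fC card_alloc_ne[OF assms(3)] by (intro Max_in) auto
  then obtain g where g: "g \<in> cardinal_allocations n m k" "card_ESW n m k (inst n m) = ESW n m (inst n m) g"
    by auto
  have "ESW n m (inst n m) g \<le> sum (inst n m 0) (good_bundle m g 0)"
    unfolding ESW_def using assms by (intro Min_le) auto
  also have "\<dots> \<le> real (card (good_bundle m g 0)) * (1 / real ?p)"
    by (intro sum_bounded_above) (auto simp: inst_def)
  also have "\<dots> \<le> real k * (1 / real ?p)"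
    using g(1) assms(1) unfolding cardinal_allocations_def by (intro mult_right_mono) auto
  finally show ?thesis using g(2) by (simp add: field_simps)
qed


theorem theorem2:
  fixes n m k :: nat
  assumes "0 < n" and "0 < m" and "0 < k" and "n \<le> m" and "k < m" and "m \<le> k * n"
  shows "(SUP v\<in>{v. valid_instance n m v}. esw_ratio n m k v)
           = ereal (max ((real m - real n + 1) / real k) 1)"
proof -
  define R where "R = max ((real m - real n + 1) / real k) 1"
  have R': "R = max (real (m - n + 1) / real k) 1" using assms(4) by (simp add: R_def of_nat_diff algebra_simps)
  have le: "(SUP v\<in>{v. valid_instance n m v}. esw_ratio n m k v) \<le> ereal R"
  proof (rule SUP_least)
    fix v assume "v \<in> {v. valid_instance n m v}"
    then show "esw_ratio n m k v \<le> ereal R"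
      using ratio_upper[OF assms(1,3,4,6)] unfolding R' by auto
  qed
  define OPT where "OPT = OPT_ESW n m (inst n m)"
  define c where "c = card_ESW n m k (inst n m)"
  have val: "valid_instance n m (inst n m)" using inst_valid assms by auto
  have o1: "1 \<le> OPT" unfolding OPT_def using inst_opt assms by auto
  have cp: "c * real (m - n + 1) \<le> real k" unfolding c_def using inst_card assms by auto
  have u1: "OPT \<le> c * R" using upper(1)[OF assms(1,3,4,6) val] o1
    unfolding OPT_def c_def R' by simp
  have u2: "c \<le> OPT" using upper(2)[OF assms(1,3,4,6) val] o1
    unfolding OPT_def c_def by simp
  have R1: "R \<ge> 1" unfolding R_def by simp
  have cpos: "0 < c"
  proof (rule ccontr)
    assume "\<not> 0 < c"
    then have "c * R \<le> 0" using R1 by (simp add: mult_nonpos_nonneg)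
    then show False using u1 o1 by simp
  qed
  have a1: "1 \<le> OPT / c" using u2 cpos by simp
  have "real (m - n + 1) / real k \<le> 1 / c" using cp cpos assms(3)
    by (simp add: field_simps)
  also have "1 / c \<le> OPT / c" using o1 cpos by (intro divide_right_mono) auto
  finally have a2: "real (m - n + 1) / real k \<le> OPT / c" .
  have "R \<le> OPT / c" unfolding R' using a1 a2 by simp
  moreover have "esw_ratio n m k (inst n m) = ereal (OPT / c)"
    unfolding esw_ratio_def OPT_def[symmetric] c_def[symmetric] using o1 cpos by simp
  ultimately have "ereal R \<le> esw_ratio n m k (inst n m)" by simp
  then have ge: "ereal R \<le> (SUP v\<in>{v. valid_instance n m v}. esw_ratio n m k v)"
    using val by (intro SUP_upper2[of "inst n m"]) auto
  show ?thesis using le ge unfolding R_def by (rule antisym)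
qed


end
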